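(* Fix $j\in\{1,\dots,p\}$ and assume the setting in the context with $\tilde m(\mathbf x)=\sum_{\ell=1}^p m_\ell(x^{(\ell)})$ for functions $m_\ell:[0,1]\to\mathbb R$, $\sup_{\mathbf x\in[0,1]^p}|\tilde m(\mathbf x)|\le K$ for some $K>0$, $\mathbb E[\varepsilon^4]<\infty$, and $\mathrm{Var}(m_j(X^{(j)}))>0$. Then there is a constant $c_1>0$ such that $$\mathbb E\big[|h_\gamma-I(j)|^2\big]=\zeta_\gamma\sim \frac{c_1}{\gamma}\qquad(\gamma\to\infty).$$
   Context: Setting. Let $p\ge 1$. Let $\mathbf X=(X^{(1)},\dots,X^{(p)})$ be uniformly distributed on $[0,1]^p$ (so its coordinates are mutually independent), and let $Y=\tilde m(\mathbf X)+\varepsilon$, where $\tilde m:[0,1]^p\to\mathbb R$ is measurable, $\varepsilon$ is independent of $\mathbf X$, $\mathbb E[\varepsilon]=0$ and $\mathrm{Var}(\varepsilon)=\sigma^2>0$. Let $\mathbf Z_i=(\mathbf X_i,Y_i)$, $i=1,2,\dots$, be i.i.d. copies of $(\mathbf X,Y)$. Fix the feature index $j$. Permuted points and kernel. A derangement of a finite set $S$ is a bijection $\pi:S\to S$ with $\pi(i)\neq i$ for all $i$. For a derangement $\pi$ of an index set $S$ and $i\in S$, let $\mathbf X_i^{\pi}$ be the vector $\mathbf X_i$ with its $j$-th coordinate replaced by $X_{\pi(i)}^{(j)}$. For an integer $\gamma\ge 2$ define the random variable $$h_\gamma=h_\gamma(\mathbf Z_1,\dots,\mathbf Z_\gamma;\pi)=\frac1\gamma\sum_{i=1}^\gamma\Big\{\big(Y_i-\tilde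 m(\mathbf X_i^{\pi})\big)^2-\big(Y_i-\tilde m(\mathbf X_i)\big)^2\Big\},$$ where $\pi$ is a uniformly distributed random derangement of $\{1,\dots,\gamma\}$, independent of the data. Set $\zeta_\gamma=\mathrm{Var}(h_\gamma)$. Target. $I(j)=\mathbb E\big[(Y_1-\tilde m(\mathbf X_{j,1}))^2\big]-\sigma^2$, where $\mathbf X_{j,1}$ is $\mathbf X_1$ with its $j$-th coordinate replaced by an independent copy of $X_1^{(j)}$ (independent of everything else). *)

theory Defs
  imports "HOL-Probability.Probability" "HOL-Combinatorics.Permutations" "HOL-Library.Landau_Symbols"
begin

definition unif01 :: "real measure" where
  "unif01 = restrict_space lborel {0..1}"

definition Xdist :: "nat \<Rightarrow> (nat \<Rightarrow> real) measure" where
  "Xdist p = PiM {1..p} (\<lambda>_. unif01)"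

definition mtilde :: "(nat \<Rightarrow> real \<Rightarrow> real) \<Rightarrow> nat \<Rightarrow> (nat \<Rightarrow> real) \<Rightarrow> real" where
  "mtilde m p x = (\<Sum>l\<in>{1..p}. m l (x l))"

text \<open>Distribution of one observation (X, eps), X and eps independent; Y = f X + eps.\<close>
definition Zdist :: "nat \<Rightarrow> real measure \<Rightarrow> ((nat \<Rightarrow> real) \<times> real) measure" where
  "Zdist p E = Xdist p \<Otimes>\<^sub>M E"

definition derangements :: "nat set \<Rightarrow> (nat \<Rightarrow> nat) set" where
  "derangements S = {\<pi>. \<pi> permutes S \<and> (\<forall>i\<in>S. \<pi> i \<noteq> i)}"

definition sample_space :: "nat \<Rightarrow> real measure \<Rightarrow> nat
    \<Rightarrow> ((nat \<Rightarrow> (nat \<Rightarrow> real) \<times> real) \<times> (nat \<Rightarrow> nat)) measure" where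
  "sample_space p E \<gamma> =
     PiM {1..\<gamma>} (\<lambda>_. Zdist p E) \<Otimes>\<^sub>M measure_pmf (pmf_of_set (derangements {1..\<gamma>}))"

definition hgam :: "((nat \<Rightarrow> real) \<Rightarrow> real) \<Rightarrow> nat \<Rightarrow> nat
    \<Rightarrow> (nat \<Rightarrow> (nat \<Rightarrow> real) \<times> real) \<times> (nat \<Rightarrow> nat) \<Rightarrow> real" where
  "hgam f j \<gamma> \<omega> =
     (1 / real \<gamma>) * (\<Sum>i\<in>{1..\<gamma>}.
        (f (fst (fst \<omega> i)) + snd (fst \<omega> i)
            - f ((fst (fst \<omega> i))(j := fst (fst \<omega> (snd \<omega> i)) j)))\<^sup>2
        - (f (fst (fst \<omega> i)) + snd (fst \<omega> i) - f (fst (fst \<omega> i)))\<^sup>2)"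

definition var :: "'a measure \<Rightarrow> ('a \<Rightarrow> real) \<Rightarrow> real" where
  "var M g = (\<integral>x. (g x - (\<integral>y. g y \<partial>M))\<^sup>2 \<partial>M)"

definition zeta :: "((nat \<Rightarrow> real) \<Rightarrow> real) \<Rightarrow> nat \<Rightarrow> real measure \<Rightarrow> nat \<Rightarrow> nat \<Rightarrow> real" where
  "zeta f p E j \<gamma> = var (sample_space p E \<gamma>) (hgam f j \<gamma>)"

text \<open>I(j) = E[(Y - f(X_j))^2] - sigma^2, with X_j = X whose j-th coordinate is replaced by an
  independent uniform copy u.\<close>
definition importance :: "((nat \<Rightarrow> real) \<Rightarrow> real) \<Rightarrow> nat \<Rightarrow> real measure \<Rightarrow> nat \<Rightarrow> real" where
  "importance f p E j =
     (\<integral>\<omega>. (f (fst (fst \<omega>)) + snd (fst \<omega>) - f ((fst (fst \<omega>))(j := snd \<omega>)))\<^sup>2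
        \<partial>(Zdist p E \<Otimes>\<^sub>M unif01)) - var E (\<lambda>e. e)"

end

theory Submission
  imports Defs
begin


lemma pair_prod_integrable:
  fixes f g :: "_ \<Rightarrow> real"
  assumes "prob_space M1" "prob_space M2" "integrable M1 f" "integrable M2 g"
  shows "integrable (M1 \<Otimes>\<^sub>M M2) (\<lambda>x. f (fst x) * g (snd x))"
proof -
  interpret M1: prob_space M1 by fact
  interpret M2: prob_space M2 by fact
  interpret pair_sigma_finite M1 M2 by unfold_locales
  show ?thesis
  proof (rule Fubini_integrable)
    show "(\<lambda>x. f (fst x) * g (snd x)) \<in> borel_measurable (M1 \<Otimes>\<^sub>M M2)"
      using assms by measurable
    have "integrable M1 (\<lambda>x. norm (f x) * (\<integral>y. norm (g y) \<partial>M2))"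
      using assms by (intro integrable_mult_left) auto
    then show "integrable M1 (\<lambda>x. \<integral>y. norm (f (fst (x, y)) * g (snd (x, y))) \<partial>M2)"
      by (simp add: norm_mult abs_mult)
    show "AE x in M1. integrable M2 (\<lambda>y. f (fst (x, y)) * g (snd (x, y)))"
      using assms by auto
  qed
qed

lemma pair_prod_integral:
  fixes f g :: "_ \<Rightarrow> real"
  assumes "prob_space M1" "prob_space M2" "integrable M1 f" "integrable M2 g"
  shows "(\<integral>x. f (fst x) * g (snd x) \<partial>(M1 \<Otimes>\<^sub>M M2)) = integral\<^sup>L M1 f * integral\<^sup>L M2 g"
proof -
  interpret M1: prob_space M1 by fact
  interpret M2: prob_space M2 by fact
  interpret pair_sigma_finite M1 M2 by unfold_locales
  have "(\<integral>x. f (fst x) * g (snd x) \<partial>(M1 \<Otimes>\<^sub>M M2)) = (\<integral>x. (\<integral>y. f (fst (x,y)) * g (snd (x,y)) \<partial>M2) \<partial>M1)"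
    using integral_fst'[OF pair_prod_integrable[OF assms]] by simp
  also have "\<dots> = (\<integral>x. f x * integral\<^sup>L M2 g \<partial>M1)" by simp
  also have "\<dots> = integral\<^sup>L M1 f * integral\<^sup>L M2 g" by simp
  finally show ?thesis .
qed

lemma PiM_subset_prod:
  fixes F :: "'i \<Rightarrow> 'a \<Rightarrow> real"
  assumes N: "prob_space N" and I: "finite I" and J: "J \<subseteq> I"
    and int: "\<And>l. l \<in> J \<Longrightarrow> integrable N (F l)"
  shows "integrable (PiM I (\<lambda>_. N)) (\<lambda>x. \<Prod>l\<in>J. F l (x l))"
    and "(\<integral>x. (\<Prod>l\<in>J. F l (x l)) \<partial>PiM I (\<lambda>_. N)) = (\<Prod>l\<in>J. integral\<^sup>L N (F l))"
proof -
  interpret N: prob_space N by fact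
  interpret product_sigma_finite "\<lambda>_. N"
    by unfold_locales
  define G where "G l = (\<lambda>y. if l \<in> J then F l y else 1)" for l
  have G: "\<And>l. l \<in> I \<Longrightarrow> integrable N (G l)"
    using int by (case_tac "l \<in> J") (auto simp: G_def)
  have eq: "(\<Prod>l\<in>I. G l (x l)) = (\<Prod>l\<in>J. F l (x l))" for x
  proof -
    have "(\<Prod>l\<in>I. G l (x l)) = (\<Prod>l\<in>I. if l \<in> J then F l (x l) else 1)"
      by (simp add: G_def)
    also have "\<dots> = (\<Prod>l\<in>J. F l (x l))"
      using J I by (simp add: prod.If_cases Int_absorb1 Int_absorb2)
    finally show ?thesis .
  qed
  have eq2: "(\<Prod>l\<in>I. integral\<^sup>L N (G l)) = (\<Prod>l\<in>J. integral\<^sup>L N (F l))"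
  proof -
    have "(\<Prod>l\<in>I. integral\<^sup>L N (G l)) = (\<Prod>l\<in>I. if l \<in> J then integral\<^sup>L N (F l) else 1)"
      by (intro prod.cong) (auto simp: G_def N.prob_space)
    also have "\<dots> = (\<Prod>l\<in>J. integral\<^sup>L N (F l))"
      using J I by (simp add: prod.If_cases Int_absorb1 Int_absorb2)
    finally show ?thesis .
  qed
  show "integrable (PiM I (\<lambda>_. N)) (\<lambda>x. \<Prod>l\<in>J. F l (x l))"
    using product_integrable_prod[of I G, OF I G] by (simp add: eq)
  show "(\<integral>x. (\<Prod>l\<in>J. F l (x l)) \<partial>PiM I (\<lambda>_. N)) = (\<Prod>l\<in>J. integral\<^sup>L N (F l))"
    using product_integral_prod[of I G, OF I G] by (simp add: eq eq2)
qed

lemma pair_pmf_integral: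
  fixes F :: "'a \<times> 'b \<Rightarrow> real"
  assumes P: "prob_space P" and D: "finite D" "D \<noteq> {}"
    and meas: "F \<in> borel_measurable (P \<Otimes>\<^sub>M measure_pmf (pmf_of_set D))"
    and int: "\<And>d. d \<in> D \<Longrightarrow> integrable P (\<lambda>z. F (z, d))"
  shows "integrable (P \<Otimes>\<^sub>M measure_pmf (pmf_of_set D)) F"
    and "integral\<^sup>L (P \<Otimes>\<^sub>M measure_pmf (pmf_of_set D)) F = (\<Sum>d\<in>D. \<integral>z. F (z, d) \<partial>P) / card D"
proof -
  interpret P: prob_space P by fact
  interpret pair_sigma_finite P "measure_pmf (pmf_of_set D)" by unfold_locales
  have "(\<integral>\<^sup>+ x. ennreal (norm (F x)) \<partial>(P \<Otimes>\<^sub>M measure_pmf (pmf_of_set D)))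
      = (\<integral>\<^sup>+ y. (\<integral>\<^sup>+ x. ennreal (norm (F (x, y))) \<partial>P) \<partial>measure_pmf (pmf_of_set D))"
    using meas by (subst nn_integral_snd[symmetric]) auto
  also have "\<dots> = (\<Sum>y\<in>D. (\<integral>\<^sup>+ x. ennreal (norm (F (x, y))) \<partial>P)) / card D"
    using D by (simp add: nn_integral_pmf_of_set)
  also have "\<dots> < \<infinity>"
  proof -
    have "(\<Sum>y\<in>D. (\<integral>\<^sup>+ x. ennreal (norm (F (x, y))) \<partial>P)) < \<infinity>"
      using int D(1) by (simp add: integrable_iff_bounded less_top[symmetric])
    then show ?thesis using D
      by (simp add: divide_ennreal_def ennreal_mult_less_top card_gt_0_iff ennreal_of_nat_eq_real_of_nat inverse_ennreal)
  qed
  finally show I: "integrable (P \<Otimes>\<^sub>M measure_pmf (pmf_of_set D)) F"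
    using meas by (simp add: integrable_iff_bounded)
  have "integral\<^sup>L (P \<Otimes>\<^sub>M measure_pmf (pmf_of_set D)) F
      = (\<integral>y. (\<integral>x. F (x, y) \<partial>P) \<partial>measure_pmf (pmf_of_set D))"
    using integral_snd[of "\<lambda>x y. F (x,y)"] I by simp
  also have "\<dots> = (\<Sum>d\<in>D. \<integral>z. F (z, d) \<partial>P) / card D"
    using D by (simp add: integral_pmf_of_set)
  finally show "integral\<^sup>L (P \<Otimes>\<^sub>M measure_pmf (pmf_of_set D)) F = (\<Sum>d\<in>D. \<integral>z. F (z, d) \<partial>P) / card D" .
qed

lemma PiM1:
  fixes f :: "'a \<Rightarrow> real"
  assumes N: "prob_space N" and I: "finite I" "i \<in> I" and f: "integrable N f"
  shows "integrable (PiM I (\<lambda>_. N)) (\<lambda>z. f (z i))"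
    and "(\<integral>z. f (z i) \<partial>PiM I (\<lambda>_. N)) = integral\<^sup>L N f"
  using PiM_subset_prod[OF N I(1), of "{i}" "\<lambda>_. f"] I f by auto

lemma PiM2:
  fixes f g :: "'a \<Rightarrow> real"
  assumes N: "prob_space N" and I: "finite I" "i \<in> I" "k \<in> I" "i \<noteq> k"
    and f: "integrable N f" and g: "integrable N g"
  shows "integrable (PiM I (\<lambda>_. N)) (\<lambda>z. f (z i) * g (z k))"
    and "(\<integral>z. f (z i) * g (z k) \<partial>PiM I (\<lambda>_. N)) = integral\<^sup>L N f * integral\<^sup>L N g"
  using PiM_subset_prod[OF N I(1), of "{i,k}" "\<lambda>l. if l = i then f else g"] I f g by auto

lemma PiM3:
  fixes f g h :: "'a \<Rightarrow> real"
  assumes N: "prob_space N" and I: "finite I" "i \<in> I" "k \<in> I" "l \<in> I" "i \<noteq> k" "i \<noteq> l" "k \<noteq> l"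
    and f: "integrable N f" and g: "integrable N g" and h: "integrable N h"
  shows "integrable (PiM I (\<lambda>_. N)) (\<lambda>z. f (z i) * g (z k) * h (z l))"
    and "(\<integral>z. f (z i) * g (z k) * h (z l) \<partial>PiM I (\<lambda>_. N)) = integral\<^sup>L N f * integral\<^sup>L N g * integral\<^sup>L N h"
  using PiM_subset_prod[OF N I(1), of "{i,k,l}" "\<lambda>x. if x = i then f else if x = k then g else h"] I f g h
  by (auto simp: mult.assoc)

lemma PiM4:
  fixes f g h q :: "'a \<Rightarrow> real"
  assumes N: "prob_space N" and I: "finite I" "i \<in> I" "k \<in> I" "l \<in> I" "r \<in> I"
     "i \<noteq> k" "i \<noteq> l" "k \<noteq> l" "i \<noteq> r" "k \<noteq> r" "l \<noteq> r"
    and f: "integrable N f" and g: "integrable N g" and h: "integrable N h" and q: "integrable N q"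
  shows "integrable (PiM I (\<lambda>_. N)) (\<lambda>z. f (z i) * g (z k) * h (z l) * q (z r))"
    and "(\<integral>z. f (z i) * g (z k) * h (z l) * q (z r) \<partial>PiM I (\<lambda>_. N))
         = integral\<^sup>L N f * integral\<^sup>L N g * integral\<^sup>L N h * integral\<^sup>L N q"
  using PiM_subset_prod[OF N I(1), of "{i,k,l,r}"
      "\<lambda>x. if x = i then f else if x = k then g else if x = l then h else q"] I f g h q
  by (auto simp: mult.assoc)

lemma integral_double_sum:
  fixes f :: "'i \<Rightarrow> 'j \<Rightarrow> 'a \<Rightarrow> real"
  assumes I: "finite I" "finite K" and int: "\<And>i k. i\<in>I \<Longrightarrow> k\<in>K \<Longrightarrow> integrable M (\<lambda>x. f i k x)"
  shows "integrable M (\<lambda>x. \<Sum>i\<in>I. \<Sum>k\<in>K. f i k x)"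
    and "(\<integral>x. (\<Sum>i\<in>I. \<Sum>k\<in>K. f i k x) \<partial>M) = (\<Sum>i\<in>I. \<Sum>k\<in>K. \<integral>x. f i k x \<partial>M)"
proof -
  have i1: "\<And>i. i \<in> I \<Longrightarrow> integrable M (\<lambda>x. \<Sum>k\<in>K. f i k x)"
    by (intro Bochner_Integration.integrable_sum) (simp_all add: int)
  then show "integrable M (\<lambda>x. \<Sum>i\<in>I. \<Sum>k\<in>K. f i k x)"
    by (intro Bochner_Integration.integrable_sum) (simp_all add: int)
  have "(\<integral>x. (\<Sum>i\<in>I. \<Sum>k\<in>K. f i k x) \<partial>M) = (\<Sum>i\<in>I. \<integral>x. (\<Sum>k\<in>K. f i k x) \<partial>M)"
    using i1 by (intro Bochner_Integration.integral_sum) auto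
  also have "\<dots> = (\<Sum>i\<in>I. \<Sum>k\<in>K. \<integral>x. f i k x \<partial>M)"
    by (intro sum.cong refl Bochner_Integration.integral_sum) (simp_all add: int)
  finally show "(\<integral>x. (\<Sum>i\<in>I. \<Sum>k\<in>K. f i k x) \<partial>M) = (\<Sum>i\<in>I. \<Sum>k\<in>K. \<integral>x. f i k x \<partial>M)" .
qed




lemma prob_unif01: "prob_space unif01"
  unfolding unif01_def
  by (rule prob_spaceI) (simp add: emeasure_restrict_space space_restrict_space)
lemma space_unif01: "space unif01 = {0..1}"
  unfolding unif01_def by (simp add: space_restrict_space)
lemma prob_Xdist: "prob_space (Xdist p)"
  unfolding Xdist_def using prob_unif01 by (intro prob_space_PiM) auto
lemma space_Xdist: "space (Xdist p) = PiE {1..p} (\<lambda>_. {0..1})"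
  unfolding Xdist_def by (simp add: space_PiM space_unif01)

locale setting =
  fixes p j :: nat and m :: "nat \<Rightarrow> real \<Rightarrow> real" and K :: real and E :: "real measure"
  assumes j: "j \<in> {1..p}"
    and meas: "mtilde m p \<in> borel_measurable (Xdist p)"
    and bnd: "\<forall>x\<in>space (Xdist p). \<bar>mtilde m p x\<bar> \<le> K"
    and PE: "prob_space E" and sE: "sets E = sets borel"
    and e4: "integrable E (\<lambda>e. e ^ 4)"
    and e0: "(\<integral>e. e \<partial>E) = 0"
begin

lemma sE'[measurable_cong]: "sets E = sets borel" by (rule sE)
lemma spaceE: "space E = UNIV" using sets_eq_imp_space_eq[OF sE] by simp

lemma mtilde_rem: "mtilde m p y = m j (y j) + (\<Sum>l\<in>{1..p}-{j}. m l (y l))"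
  unfolding mtilde_def using j by (intro sum.remove) auto

lemma mtilde_upd: "mtilde m p (x(j:=t)) = mtilde m p x - m j (x j) + m j t"
proof -
  have "(\<Sum>l\<in>{1..p}-{j}. m l ((x(j:=t)) l)) = (\<Sum>l\<in>{1..p}-{j}. m l (x l))"
    by (intro sum.cong) auto
  then show ?thesis using mtilde_rem[of "x(j:=t)"] mtilde_rem[of x] by simp
qed

definition x0 :: "nat \<Rightarrow> real" where "x0 = (\<lambda>l\<in>{1..p}. 0)"

lemma x0_space: "t \<in> {0..1} \<Longrightarrow> x0(j:=t) \<in> space (Xdist p)"
  using j by (auto simp: space_Xdist x0_def PiE_def extensional_def Pi_def)

lemma x0_space': "x0 \<in> space (Xdist p)"
  by (auto simp: space_Xdist x0_def PiE_def extensional_def Pi_def)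

lemma mj_eq: "m j t = mtilde m p (x0(j:=t)) - mtilde m p x0 + m j 0"
  using mtilde_upd[of x0 t] j by (simp add: x0_def)

lemma x0_meas: "(\<lambda>t. x0(j:=t)) \<in> measurable unif01 (Xdist p)"
proof -
  have eq: "(\<lambda>t. x0(j:=t)) = (\<lambda>t. \<lambda>l\<in>{1..p}. if l = j then t else 0)"
    using j by (auto simp: x0_def fun_eq_iff)
  show ?thesis unfolding eq Xdist_def
    by (intro measurable_restrict) (auto simp: space_unif01)
qed

lemma mj_meas[measurable]: "m j \<in> borel_measurable unif01"
proof -
  have "(\<lambda>t. mtilde m p (x0(j:=t)) - mtilde m p x0 + m j 0) \<in> borel_measurable unif01"
    using measurable_comp[OF x0_meas meas] by (simp add: o_def)
  then show ?thesis by (simp add: mj_eq[symmetric])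
qed

definition Cm where "Cm = 2 * K + \<bar>m j 0\<bar>"

lemma mj_bnd: "t \<in> {0..1} \<Longrightarrow> \<bar>m j t\<bar> \<le> Cm"
proof -
  assume t: "t \<in> {0..1}"
  have "\<bar>mtilde m p (x0(j:=t))\<bar> \<le> K" using bnd x0_space[OF t] by auto
  moreover have "\<bar>mtilde m p x0\<bar> \<le> K" using bnd x0_space' by auto
  ultimately show ?thesis unfolding Cm_def by (subst mj_eq) linarith
qed

definition mu where "mu = (\<integral>t. m j t \<partial>unif01)"
definition bf where "bf t = m j t - mu"
definition Cb where "Cb = Cm + \<bar>mu\<bar>"

lemma bf_meas[measurable]: "bf \<in> borel_measurable unif01"
  unfolding bf_def by measurable

lemma bf_bnd: "t \<in> {0..1} \<Longrightarrow> \<bar>bf t\<bar> \<le> Cb"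
  using mj_bnd[of t] unfolding bf_def Cb_def by linarith

lemma Cb_nonneg: "0 \<le> Cb"
  using bf_bnd[of 0] by simp

lemma int_U_pow: "integrable unif01 (\<lambda>t. bf t ^ k)"
proof -
  interpret U: prob_space unif01 by (rule prob_unif01)
  show ?thesis
  proof (rule U.integrable_const_bound[where B="Cb ^ k"])
    show "AE x in unif01. norm (bf x ^ k) \<le> Cb ^ k"
      using bf_bnd by (auto simp: space_unif01 power_abs intro!: AE_I2 power_mono)
  qed measurable
qed

lemma int_mj: "integrable unif01 (m j)"
proof -
  interpret U: prob_space unif01 by (rule prob_unif01)
  have "integrable unif01 (\<lambda>t. bf t + mu)"
    by (rule Bochner_Integration.integrable_add[OF _ U.integrable_const]) (use int_U_pow[of 1] in simp)
  then show ?thesis by (simp add: bf_def)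
qed

lemma int_bf0: "(\<integral>t. bf t \<partial>unif01) = 0"
proof -
  interpret U: prob_space unif01 by (rule prob_unif01)
  show ?thesis unfolding bf_def using int_mj by (simp add: mu_def U.prob_space)
qed

lemma int_E_pow: "l \<le> 4 \<Longrightarrow> integrable E (\<lambda>e. e ^ l)"
proof -
  assume l: "l \<le> 4"
  interpret E: prob_space E by (rule PE)
  have i: "integrable E (\<lambda>e. 1 + e^4)" using e4 by simp
  show ?thesis
  proof (rule Bochner_Integration.integrable_bound[OF i])
    show "(\<lambda>e. e ^ l) \<in> borel_measurable E" by measurable
    show "AE x in E. norm (x ^ l) \<le> norm (1 + x ^ 4)"
    proof (intro AE_I2)
      fix x :: real
      have "\<bar>x\<bar> ^ l \<le> 1 + x ^ 4"
      proof (cases "\<bar>x\<bar> \<le> 1")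
        case True
        then have "\<bar>x\<bar> ^ l \<le> 1" by (simp add: power_le_one)
        moreover have "0 \<le> x ^ 4" by (simp add: zero_le_even_power)
        ultimately show ?thesis by linarith
      next
        case False
        then have "\<bar>x\<bar> ^ l \<le> \<bar>x\<bar> ^ 4" using l by (intro power_increasing) auto
        then show ?thesis by (simp add: power_abs[symmetric] power_even_abs)
      qed
      moreover have "0 \<le> 1 + x ^ 4" by (simp add: zero_le_even_power add_nonneg_nonneg)
      ultimately show "norm (x ^ l) \<le> norm (1 + x ^ 4)" by (simp add: power_abs)
    qed
  qed
qed

lemma X_comp:
  fixes \<phi> :: "real \<Rightarrow> real"
  assumes "integrable unif01 \<phi>"
  shows "integrable (Xdist p) (\<lambda>x. \<phi> (x j))" and "(\<integral>x. \<phi> (x j) \<partial>Xdist p) = integral\<^sup>L unif01 \<phi>"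
  using PiM_subset_prod[OF prob_unif01, of "{1..p}" "{j}" "\<lambda>_. \<phi>"] assms j
  by (auto simp: Xdist_def)

abbreviation Z where "Z \<equiv> Xdist p \<Otimes>\<^sub>M E"

lemma prob_Z: "prob_space Z"
  using prob_Xdist PE by (intro prob_space_pair) auto

definition B :: "(nat \<Rightarrow> real) \<times> real \<Rightarrow> real" where "B z = bf (fst z j)"

lemma comp_meas[measurable]: "(\<lambda>x. x j) \<in> measurable (Xdist p) unif01"
  unfolding Xdist_def using j by measurable

lemma B_meas[measurable]: "B \<in> borel_measurable Z"
  unfolding B_def by measurable

lemma mono:
  assumes "l \<le> 4"
  shows "integrable Z (\<lambda>z. B z ^ k * snd z ^ l)"
    and "(\<integral>z. B z ^ k * snd z ^ l \<partial>Z) = (\<integral>t. bf t ^ k \<partial>unif01) * (\<integral>e. e ^ l \<partial>E)"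
proof -
  have i1: "integrable (Xdist p) (\<lambda>x. bf (x j) ^ k)"
    using X_comp(1)[OF int_U_pow] .
  have i2: "integrable E (\<lambda>e. e ^ l)" using int_E_pow[OF assms] .
  show "integrable Z (\<lambda>z. B z ^ k * snd z ^ l)"
    using pair_prod_integrable[OF prob_Xdist PE i1 i2] by (simp add: B_def)
  show "(\<integral>z. B z ^ k * snd z ^ l \<partial>Z) = (\<integral>t. bf t ^ k \<partial>unif01) * (\<integral>e. e ^ l \<partial>E)"
    using pair_prod_integral[OF prob_Xdist PE i1 i2] X_comp(2)[OF int_U_pow] by (simp add: B_def)
qed

definition Mon where "Mon k l z = B z ^ k * snd z ^ l"
definition IU where "IU k = (\<integral>t. bf t ^ k \<partial>unif01)"
definition IE where "IE l = (\<integral>e. e ^ l \<partial>E)"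
definition s2 where "s2 = IU 2"
definition sig2 where "sig2 = IE 2"

lemma Mon_int[simp]: "l \<le> 4 \<Longrightarrow> integrable Z (Mon k l)"
  using mono(1)[of l k] unfolding Mon_def by simp
lemma Mon_integral[simp]: "l \<le> 4 \<Longrightarrow> integral\<^sup>L Z (Mon k l) = IU k * IE l"
  using mono(2)[of l k] unfolding Mon_def IU_def IE_def by simp

lemma IU0[simp]: "IU 0 = 1"
proof -
  interpret U: prob_space unif01 by (rule prob_unif01)
  show ?thesis by (simp add: IU_def U.prob_space)
qed
lemma IU1[simp]: "IU 1 = 0" using int_bf0 by (simp add: IU_def)
lemma IE0[simp]: "IE 0 = 1"
proof -
  interpret E: prob_space E by (rule PE)
  show ?thesis by (simp add: IE_def E.prob_space)
qed
lemma IE1[simp]: "IE 1 = 0" using e0 by (simp add: IE_def)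
lemma IU1'[simp]: "IU (Suc 0) = 0" using IU1 by simp
lemma IE1'[simp]: "IE (Suc 0) = 0" using IE1 by simp
lemma IU2[simp]: "IU 2 = s2" by (simp add: s2_def)
lemma IE2[simp]: "IE 2 = sig2" by (simp add: sig2_def)

definition g where "g z = 2 * B z ^ 2 - 2 * s2 + 2 * snd z * B z"
definition v where "v z = B z + snd z"

lemma eqB: "B = Mon 1 0" by (auto simp: fun_eq_iff Mon_def)
lemma eqv: "v = (\<lambda>z. Mon 1 0 z + Mon 0 1 z)" by (auto simp: fun_eq_iff Mon_def v_def)
lemma eqg: "g = (\<lambda>z. 2 * Mon 2 0 z - 2 * s2 * Mon 0 0 z + 2 * Mon 1 1 z)"
  by (auto simp: fun_eq_iff Mon_def g_def)
lemma eqgg: "(\<lambda>z. g z * g z) = (\<lambda>z. 4 * Mon 4 0 z - 8 * s2 * Mon 2 0 z + 4 * s2^2 * Mon 0 0 z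
   + 8 * Mon 3 1 z - 8 * s2 * Mon 1 1 z + 4 * Mon 2 2 z)"
  by (auto simp: fun_eq_iff Mon_def g_def algebra_simps eval_nat_numeral)
lemma eqgv: "(\<lambda>z. g z * v z) = (\<lambda>z. 2 * Mon 3 0 z - 2 * s2 * Mon 1 0 z + 2 * Mon 2 1 z
   + 2 * Mon 2 1 z - 2 * s2 * Mon 0 1 z + 2 * Mon 1 2 z)"
  by (auto simp: fun_eq_iff Mon_def g_def v_def algebra_simps eval_nat_numeral)
lemma eqgB: "(\<lambda>z. g z * B z) = (\<lambda>z. 2 * Mon 3 0 z - 2 * s2 * Mon 1 0 z + 2 * Mon 2 1 z)"
  by (auto simp: fun_eq_iff Mon_def g_def algebra_simps eval_nat_numeral)
lemma eqvv: "(\<lambda>z. v z * v z) = (\<lambda>z. Mon 2 0 z + 2 * Mon 1 1 z + Mon 0 2 z)"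
  by (auto simp: fun_eq_iff Mon_def v_def algebra_simps eval_nat_numeral)
lemma eqBB: "(\<lambda>z. B z * B z) = Mon 2 0"
  by (auto simp: fun_eq_iff Mon_def algebra_simps eval_nat_numeral)
lemma eqvB: "(\<lambda>z. v z * B z) = (\<lambda>z. Mon 2 0 z + Mon 1 1 z)"
  by (auto simp: fun_eq_iff Mon_def v_def algebra_simps eval_nat_numeral)
lemma eqBv: "(\<lambda>z. B z * v z) = (\<lambda>z. Mon 2 0 z + Mon 1 1 z)"
  by (auto simp: fun_eq_iff Mon_def v_def algebra_simps eval_nat_numeral)

lemma intB: "integrable Z B" by (simp add: eqB)
lemma intv: "integrable Z v" by (simp add: eqv)
lemma intg: "integrable Z g" by (simp add: eqg)
lemma intgg: "integrable Z (\<lambda>z. g z * g z)" by (simp add: eqgg)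
lemma intgv: "integrable Z (\<lambda>z. g z * v z)" by (simp add: eqgv)
lemma intgB: "integrable Z (\<lambda>z. g z * B z)" by (simp add: eqgB)
lemma intvv: "integrable Z (\<lambda>z. v z * v z)" by (simp add: eqvv)
lemma intBB: "integrable Z (\<lambda>z. B z * B z)" by (simp add: eqBB)
lemma intvB: "integrable Z (\<lambda>z. v z * B z)" by (simp add: eqvB)
lemma intBv: "integrable Z (\<lambda>z. B z * v z)" by (simp add: eqBv)

lemma IntB: "integral\<^sup>L Z B = 0" by (simp add: eqB)
lemma Intv: "integral\<^sup>L Z v = 0" by (simp add: eqv)
lemma Intg: "integral\<^sup>L Z g = 0" by (simp add: eqg)
lemma Intvv: "(\<integral>z. v z * v z \<partial>Z) = s2 + sig2" by (simp add: eqvv)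
lemma IntBB: "(\<integral>z. B z * B z \<partial>Z) = s2" by (simp add: eqBB)
lemma IntvB: "(\<integral>z. v z * B z \<partial>Z) = s2" by (simp add: eqvB)
lemma IntBv: "(\<integral>z. B z * v z \<partial>Z) = s2" by (simp add: eqBv)

lemma Eg2_nonneg: "0 \<le> (\<integral>z. g z * g z \<partial>Z)"
  by (intro integral_nonneg_AE) auto

context
  fixes \<gamma> :: nat and \<pi> :: "nat \<Rightarrow> nat"
  assumes pi: "\<pi> permutes {1..\<gamma>}" and der: "\<forall>i\<in>{1..\<gamma>}. \<pi> i \<noteq> i"
begin

abbreviation P where "P \<equiv> PiM {1..\<gamma>} (\<lambda>_. Z)"

lemma pi_in: "i \<in> {1..\<gamma>} \<Longrightarrow> \<pi> i \<in> {1..\<gamma>}"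
  using pi permutes_in_image[OF pi] by blast
lemma pi_ne: "i \<in> {1..\<gamma>} \<Longrightarrow> \<pi> i \<noteq> i" using der by auto
lemma pi_ne': "i \<in> {1..\<gamma>} \<Longrightarrow> i \<noteq> \<pi> i" using der by metis
lemma pi_inj: "\<pi> i = \<pi> k \<Longrightarrow> i = k"
  using pi by (metis permutes_inj injD)

lemma fI: "finite {1..\<gamma>}" by simp

lemma termAA:
  assumes i: "i \<in> {1..\<gamma>}" and k: "k \<in> {1..\<gamma>}"
  shows "integrable P (\<lambda>z. g (z i) * g (z k))"
    and "(\<integral>z. g (z i) * g (z k) \<partial>P) = (if i = k then (\<integral>z. g z * g z \<partial>Z) else 0)"
proof -
  have "integrable P (\<lambda>z. g (z i) * g (z k)) \<and>
    (\<integral>z. g (z i) * g (z k) \<partial>P) = (if i = k then (\<integral>z. g z * g z \<partial>Z) else 0)"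
  proof (cases "i = k")
    case True
    then show ?thesis
      using PiM1[OF prob_Z fI i intgg] by simp
  next
    case False
    then show ?thesis
      using PiM2[OF prob_Z fI i k False intg intg] by (simp add: Intg)
  qed
  then show "integrable P (\<lambda>z. g (z i) * g (z k))"
    and "(\<integral>z. g (z i) * g (z k) \<partial>P) = (if i = k then (\<integral>z. g z * g z \<partial>Z) else 0)"
    by auto
qed

lemma termAB:
  assumes i: "i \<in> {1..\<gamma>}" and k: "k \<in> {1..\<gamma>}"
  shows "integrable P (\<lambda>z. g (z k) * (v (z i) * B (z (\<pi> i))))"
    and "(\<integral>z. g (z k) * (v (z i) * B (z (\<pi> i))) \<partial>P) = 0"
proof -
  have pii: "\<pi> i \<in> {1..\<gamma>}" "i \<noteq> \<pi> i" using pi_in[OF i] pi_ne[OF i] by auto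
  have "integrable P (\<lambda>z. g (z k) * (v (z i) * B (z (\<pi> i)))) \<and>
        (\<integral>z. g (z k) * (v (z i) * B (z (\<pi> i))) \<partial>P) = 0"
  proof (cases "k = i")
    case True
    have eq: "(\<lambda>z. g (z k) * (v (z i) * B (z (\<pi> i)))) = (\<lambda>z. (\<lambda>y. g y * v y) (z i) * B (z (\<pi> i)))"
      using True by (auto simp: fun_eq_iff)
    show ?thesis unfolding eq using PiM2[OF prob_Z fI i pii intgv intB] by (simp add: IntB)
  next
    case F1: False
    show ?thesis
    proof (cases "k = \<pi> i")
      case True
      have eq: "(\<lambda>z. g (z k) * (v (z i) * B (z (\<pi> i)))) = (\<lambda>z. v (z i) * (\<lambda>y. g y * B y) (z (\<pi> i)))"
        using True by (auto simp: fun_eq_iff)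
      show ?thesis unfolding eq using PiM2[OF prob_Z fI i pii intv intgB] by (simp add: Intv)
    next
      case False
      have eq: "(\<lambda>z. g (z k) * (v (z i) * B (z (\<pi> i)))) = (\<lambda>z. g (z k) * v (z i) * B (z (\<pi> i)))"
        by (auto simp: fun_eq_iff)
      show ?thesis unfolding eq using PiM3[OF prob_Z fI k i pii(1) F1 False pii(2) intg intv intB]
        by (simp add: Intg)
    qed
  qed
  then show "integrable P (\<lambda>z. g (z k) * (v (z i) * B (z (\<pi> i))))"
    and "(\<integral>z. g (z k) * (v (z i) * B (z (\<pi> i))) \<partial>P) = 0" by auto
qed

lemma termBB:
  assumes i: "i \<in> {1..\<gamma>}" and k: "k \<in> {1..\<gamma>}"
  shows "integrable P (\<lambda>z. (v (z i) * B (z (\<pi> i))) * (v (z k) * B (z (\<pi> k))))"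
    and "(\<integral>z. (v (z i) * B (z (\<pi> i))) * (v (z k) * B (z (\<pi> k))) \<partial>P)
        = (if i = k then (s2 + sig2) * s2 else if \<pi> i = k \<and> \<pi> k = i then s2 * s2 else 0)"
proof -
  have pii: "\<pi> i \<in> {1..\<gamma>}" "i \<noteq> \<pi> i" using pi_in[OF i] pi_ne[OF i] by auto
  have pik: "\<pi> k \<in> {1..\<gamma>}" "k \<noteq> \<pi> k" using pi_in[OF k] pi_ne[OF k] by auto
  let ?f = "\<lambda>z. (v (z i) * B (z (\<pi> i))) * (v (z k) * B (z (\<pi> k)))"
  let ?r = "(if i = k then (s2 + sig2) * s2 else if \<pi> i = k \<and> \<pi> k = i then s2 * s2 else 0)"
  have "integrable P ?f \<and> integral\<^sup>L P ?f = ?r"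
  proof (cases "i = k")
    case True
    have eq: "?f = (\<lambda>z. (\<lambda>y. v y * v y) (z i) * (\<lambda>y. B y * B y) (z (\<pi> i)))"
      using True by (auto simp: fun_eq_iff algebra_simps)
    show ?thesis unfolding eq using PiM2[OF prob_Z fI i pii intvv intBB] True by (simp add: Intvv IntBB)
  next
    case ik: False
    show ?thesis
    proof (cases "\<pi> i = k")
      case T1: True
      show ?thesis
      proof (cases "\<pi> k = i")
        case True
        have eq: "?f = (\<lambda>z. (\<lambda>y. v y * B y) (z i) * (\<lambda>y. B y * v y) (z k))"
          using True T1 by (auto simp: fun_eq_iff algebra_simps)
        show ?thesis unfolding eq using PiM2[OF prob_Z fI i k ik intvB intBv] True T1 ik
          by (simp add: IntvB IntBv)
      next
        case False
        have eq: "?f = (\<lambda>z. v (z i) * (\<lambda>y. B y * v y) (z k) * B (z (\<pi> k)))"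
          using T1 by (auto simp: fun_eq_iff algebra_simps)
        have d: "i \<noteq> \<pi> k" using False by auto
        show ?thesis unfolding eq using PiM3[OF prob_Z fI i k pik(1) ik d pik(2) intv intBv intB] False ik
          by (simp add: Intv)
      qed
    next
      case F1: False
      show ?thesis
      proof (cases "\<pi> k = i")
        case True
        have eq: "?f = (\<lambda>z. (\<lambda>y. v y * B y) (z i) * B (z (\<pi> i)) * v (z k))"
          using True by (auto simp: fun_eq_iff algebra_simps)
        show ?thesis unfolding eq using PiM3[OF prob_Z fI i pii(1) k pii(2) ik F1 intvB intB intv] F1 ik
          by (simp add: Intv)
      next
        case False
        have eq: "?f = (\<lambda>z. v (z i) * B (z (\<pi> i)) * v (z k) * B (z (\<pi> k)))"
          by (auto simp: fun_eq_iff algebra_simps)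
        have d1: "\<pi> i \<noteq> \<pi> k" using ik pi_inj by blast
        have d2: "i \<noteq> \<pi> k" using False by auto
        show ?thesis unfolding eq
          using PiM4[OF prob_Z fI i pii(1) k pik(1) pii(2) ik F1 d2 d1 pik(2) intv intB intv intB] False ik F1
          by (simp add: Intv)
      qed
    qed
  qed
  then show "integrable P ?f" and "integral\<^sup>L P ?f = ?r" by auto
qed


definition Asum where "Asum z = (\<Sum>i\<in>{1..\<gamma>}. g (z i))"
definition Bsum where "Bsum z = (\<Sum>i\<in>{1..\<gamma>}. v (z i) * B (z (\<pi> i)))"
definition N2 where "N2 = card {i\<in>{1..\<gamma>}. \<pi> (\<pi> i) = i}"

lemma intA: "integrable P Asum" and IntA: "integral\<^sup>L P Asum = 0"
proof -
  have "integrable P (\<lambda>z. \<Sum>i\<in>{1..\<gamma>}. g (z i))"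
    using PiM1(1)[OF prob_Z fI _ intg] by (intro Bochner_Integration.integrable_sum) auto
  then show "integrable P Asum" by (simp add: Asum_def[abs_def])
  have "integral\<^sup>L P Asum = (\<Sum>i\<in>{1..\<gamma>}. \<integral>z. g (z i) \<partial>P)"
    unfolding Asum_def using PiM1(1)[OF prob_Z fI _ intg] by (intro Bochner_Integration.integral_sum) auto
  also have "\<dots> = 0" using PiM1(2)[OF prob_Z fI _ intg] by (simp add: Intg)
  finally show "integral\<^sup>L P Asum = 0" .
qed

lemma vB_i: assumes i: "i \<in> {1..\<gamma>}"
  shows "integrable P (\<lambda>z. v (z i) * B (z (\<pi> i)))" "(\<integral>z. v (z i) * B (z (\<pi> i)) \<partial>P) = 0"
  using PiM2[OF prob_Z fI i pi_in[OF i] _ intv intB] pi_ne[OF i] by (auto simp: IntB)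

lemma intBs: "integrable P Bsum" and IntBs: "integral\<^sup>L P Bsum = 0"
proof -
  have "integrable P (\<lambda>z. \<Sum>i\<in>{1..\<gamma>}. v (z i) * B (z (\<pi> i)))"
    using vB_i by (intro Bochner_Integration.integrable_sum) auto
  then show "integrable P Bsum" by (simp add: Bsum_def[abs_def])
  have "integral\<^sup>L P Bsum = (\<Sum>i\<in>{1..\<gamma>}. \<integral>z. v (z i) * B (z (\<pi> i)) \<partial>P)"
    unfolding Bsum_def using vB_i by (intro Bochner_Integration.integral_sum) auto
  also have "\<dots> = 0" using vB_i by simp
  finally show "integral\<^sup>L P Bsum = 0" .
qed

lemma AA: "integrable P (\<lambda>z. Asum z * Asum z)"
  "(\<integral>z. Asum z * Asum z \<partial>P) = \<gamma> * (\<integral>z. g z * g z \<partial>Z)"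
proof -
  have eq: "(\<lambda>z. Asum z * Asum z) = (\<lambda>z. \<Sum>i\<in>{1..\<gamma>}. \<Sum>k\<in>{1..\<gamma>}. g (z i) * g (z k))"
    by (auto simp: fun_eq_iff Asum_def sum_product)
  show "integrable P (\<lambda>z. Asum z * Asum z)" unfolding eq
    using termAA(1) by (intro Bochner_Integration.integrable_sum) auto
  have "(\<integral>z. Asum z * Asum z \<partial>P) = (\<Sum>i\<in>{1..\<gamma>}. \<Sum>k\<in>{1..\<gamma>}. \<integral>z. g (z i) * g (z k) \<partial>P)"
    unfolding eq by (rule integral_double_sum(2)[OF fI fI termAA(1)])
  also have "\<dots> = (\<Sum>i\<in>{1..\<gamma>}. \<Sum>k\<in>{1..\<gamma>}. if i = k then (\<integral>z. g z * g z \<partial>Z) else 0)"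
    using termAA(2) by (intro sum.cong) auto
  also have "\<dots> = \<gamma> * (\<integral>z. g z * g z \<partial>Z)"
    by (simp add: sum.delta)
  finally show "(\<integral>z. Asum z * Asum z \<partial>P) = \<gamma> * (\<integral>z. g z * g z \<partial>Z)" .
qed

lemma AB: "integrable P (\<lambda>z. Asum z * Bsum z)"
  "(\<integral>z. Asum z * Bsum z \<partial>P) = 0"
proof -
  have eq: "(\<lambda>z. Asum z * Bsum z) = (\<lambda>z. \<Sum>k\<in>{1..\<gamma>}. \<Sum>i\<in>{1..\<gamma>}. g (z k) * (v (z i) * B (z (\<pi> i))))"
    by (auto simp: fun_eq_iff Asum_def Bsum_def sum_product)
  show "integrable P (\<lambda>z. Asum z * Bsum z)" unfolding eq
    using termAB(1) by (intro Bochner_Integration.integrable_sum) auto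
  have "(\<integral>z. Asum z * Bsum z \<partial>P) = (\<Sum>k\<in>{1..\<gamma>}. \<Sum>i\<in>{1..\<gamma>}. \<integral>z. g (z k) * (v (z i) * B (z (\<pi> i))) \<partial>P)"
    unfolding eq by (rule integral_double_sum(2)[OF fI fI termAB(1)])
  also have "\<dots> = 0"
    using termAB(2) by (intro sum.neutral ballI) auto
  finally show "(\<integral>z. Asum z * Bsum z \<partial>P) = 0" .
qed

lemma BB: "integrable P (\<lambda>z. Bsum z * Bsum z)"
  "(\<integral>z. Bsum z * Bsum z \<partial>P) = \<gamma> * ((s2 + sig2) * s2) + N2 * (s2 * s2)"
proof -
  have eq: "(\<lambda>z. Bsum z * Bsum z) = (\<lambda>z. \<Sum>i\<in>{1..\<gamma>}. \<Sum>k\<in>{1..\<gamma>}.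
       (v (z i) * B (z (\<pi> i))) * (v (z k) * B (z (\<pi> k))))"
    by (auto simp: fun_eq_iff Bsum_def sum_product)
  show "integrable P (\<lambda>z. Bsum z * Bsum z)" unfolding eq
    using termBB(1) by (intro Bochner_Integration.integrable_sum) auto
  have "(\<integral>z. Bsum z * Bsum z \<partial>P) = (\<Sum>i\<in>{1..\<gamma>}. \<Sum>k\<in>{1..\<gamma>}.
       \<integral>z. (v (z i) * B (z (\<pi> i))) * (v (z k) * B (z (\<pi> k))) \<partial>P)"
    unfolding eq by (rule integral_double_sum(2)[OF fI fI termBB(1)])
  also have "\<dots> = (\<Sum>i\<in>{1..\<gamma>}. \<Sum>k\<in>{1..\<gamma>}.
       (if k = i then (s2 + sig2) * s2 else 0) + (if k = \<pi> i then (if \<pi> (\<pi> i) = i then s2 * s2 else 0) else 0))"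
    using termBB(2) pi_ne pi_ne' by (intro sum.cong refl) auto
  also have "\<dots> = (\<Sum>i\<in>{1..\<gamma>}. (s2 + sig2) * s2 + (if \<pi> (\<pi> i) = i then s2 * s2 else 0))"
    using pi_in by (intro sum.cong refl) (simp add: sum.distrib sum.delta')
  also have "\<dots> = \<gamma> * ((s2 + sig2) * s2) + N2 * (s2 * s2)"
    by (simp add: sum.distrib N2_def sum.inter_filter[symmetric])
  finally show "(\<integral>z. Bsum z * Bsum z \<partial>P) = \<gamma> * ((s2 + sig2) * s2) + N2 * (s2 * s2)" .
qed


definition G where "G z = (\<Sum>i\<in>{1..\<gamma>}. (snd (z i) + B (z i) - B (z (\<pi> i)))\<^sup>2 - (snd (z i))\<^sup>2)"

lemma Gdecomp: "G z = Asum z - 2 * Bsum z + 2 * \<gamma> * s2"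
proof -
  have perm: "(\<Sum>i\<in>{1..\<gamma>}. (B (z (\<pi> i)))\<^sup>2) = (\<Sum>i\<in>{1..\<gamma>}. (B (z i))\<^sup>2)"
    using sum.permute[OF pi, of "\<lambda>i. (B (z i))\<^sup>2"] by (simp add: o_def)
  have "G z = (\<Sum>i\<in>{1..\<gamma>}. g (z i) - 2 * (v (z i) * B (z (\<pi> i))) + ((B (z (\<pi> i)))\<^sup>2 - (B (z i))\<^sup>2) + 2 * s2)"
    unfolding G_def by (intro sum.cong refl) (simp add: g_def v_def power2_eq_square algebra_simps)
  also have "\<dots> = Asum z - 2 * Bsum z + ((\<Sum>i\<in>{1..\<gamma>}. (B (z (\<pi> i)))\<^sup>2) - (\<Sum>i\<in>{1..\<gamma>}. (B (z i))\<^sup>2)) + 2 * \<gamma> * s2"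
    by (simp add: Asum_def Bsum_def sum.distrib sum_subtractf sum_distrib_left)
  finally show ?thesis using perm by simp
qed

lemma hgam_eq:
  "hgam (mtilde m p) j \<gamma> (z, \<pi>) = G z / \<gamma>"
proof -
  have "(\<Sum>i\<in>{1..\<gamma>}. (mtilde m p (fst (z i)) + snd (z i) -
          mtilde m p ((fst (z i))(j := fst (z (\<pi> i)) j)))\<^sup>2 -
         (mtilde m p (fst (z i)) + snd (z i) - mtilde m p (fst (z i)))\<^sup>2)
      = (\<Sum>i\<in>{1..\<gamma>}. (snd (z i) + B (z i) - B (z (\<pi> i)))\<^sup>2 - (snd (z i))\<^sup>2)"
    by (intro sum.cong refl) (simp add: mtilde_upd bf_def B_def algebra_simps)
  then show ?thesis by (simp add: hgam_def G_def)
qed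

lemma hP: assumes g0: "\<gamma> > 0"
  shows "integrable P (\<lambda>z. hgam (mtilde m p) j \<gamma> (z, \<pi>))"
    and "(\<integral>z. hgam (mtilde m p) j \<gamma> (z, \<pi>) \<partial>P) = 2 * s2"
    and "integrable P (\<lambda>z. (hgam (mtilde m p) j \<gamma> (z, \<pi>) - 2 * s2)\<^sup>2)"
    and "(\<integral>z. (hgam (mtilde m p) j \<gamma> (z, \<pi>) - 2 * s2)\<^sup>2 \<partial>P)
         = (\<gamma> * (\<integral>z. g z * g z \<partial>Z) + 4 * (\<gamma> * ((s2 + sig2) * s2) + N2 * (s2 * s2))) / \<gamma>\<^sup>2"
proof -
  interpret PP: prob_space P using prob_Z by (intro prob_space_PiM) auto
  have e1: "(\<lambda>z. hgam (mtilde m p) j \<gamma> (z, \<pi>)) = (\<lambda>z. (Asum z - 2 * Bsum z) / \<gamma> + 2 * s2)"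
    using g0 by (auto simp: fun_eq_iff hgam_eq Gdecomp field_simps)
  show "integrable P (\<lambda>z. hgam (mtilde m p) j \<gamma> (z, \<pi>))"
    unfolding e1 using intA intBs
    by (intro Bochner_Integration.integrable_add integrable_divide_zero Bochner_Integration.integrable_diff
       integrable_mult_right PP.integrable_const) auto
  show "(\<integral>z. hgam (mtilde m p) j \<gamma> (z, \<pi>) \<partial>P) = 2 * s2"
  proof -
    have i: "integrable P (\<lambda>z. (Asum z - 2 * Bsum z) / \<gamma>)"
      using intA intBs by (intro integrable_divide_zero Bochner_Integration.integrable_diff
       integrable_mult_right) auto
    have "(\<integral>z. (Asum z - 2 * Bsum z) / \<gamma> + 2 * s2 \<partial>P) = (\<integral>z. (Asum z - 2 * Bsum z) / \<gamma> \<partial>P) + (\<integral>z. 2 * s2 \<partial>P)"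
      by (rule Bochner_Integration.integral_add[OF i PP.integrable_const])
    also have "(\<integral>z. (Asum z - 2 * Bsum z) / \<gamma> \<partial>P) = 0"
      using intA intBs IntA IntBs by simp
    moreover have "measure P (space P) = 1" by (rule PP.prob_space)
    ultimately show ?thesis unfolding e1 by simp
  qed
  have e2: "(\<lambda>z. (hgam (mtilde m p) j \<gamma> (z, \<pi>) - 2 * s2)\<^sup>2)
    = (\<lambda>z. (Asum z * Asum z - 4 * (Asum z * Bsum z) + 4 * (Bsum z * Bsum z)) / \<gamma>\<^sup>2)"
    using g0 by (auto simp: fun_eq_iff hgam_eq Gdecomp field_simps power2_eq_square)
  show "integrable P (\<lambda>z. (hgam (mtilde m p) j \<gamma> (z, \<pi>) - 2 * s2)\<^sup>2)"
    unfolding e2 using AA(1) AB(1) BB(1) by auto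
  show "(\<integral>z. (hgam (mtilde m p) j \<gamma> (z, \<pi>) - 2 * s2)\<^sup>2 \<partial>P)
         = (\<gamma> * (\<integral>z. g z * g z \<partial>Z) + 4 * (\<gamma> * ((s2 + sig2) * s2) + N2 * (s2 * s2))) / \<gamma>\<^sup>2"
    unfolding e2 using AA AB BB by simp
qed

end


lemma hgam_pt:
  "hgam (mtilde m p) j \<gamma> \<omega> = (1 / \<gamma>) * (\<Sum>i\<in>{1..\<gamma>}.
     (snd (fst \<omega> i) + m j (fst (fst \<omega> i) j) - m j (fst (fst \<omega> (snd \<omega> i)) j))\<^sup>2 - (snd (fst \<omega> i))\<^sup>2)"
  unfolding hgam_def
  by (intro arg_cong2[where f="(*)"] refl sum.cong) (simp_all add: mtilde_upd algebra_simps)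

lemma hgam_meas:
  "hgam (mtilde m p) j \<gamma> \<in> borel_measurable (PiM {1..\<gamma>} (\<lambda>_. Z) \<Otimes>\<^sub>M measure_pmf Q)"
proof -
  let ?S = "PiM {1..\<gamma>} (\<lambda>_. Z) \<Otimes>\<^sub>M measure_pmf Q"
  have fk: "(\<lambda>\<omega>. m j (fst (fst \<omega> k) j)) \<in> borel_measurable ?S" for k
  proof (cases "k \<in> {1..\<gamma>}")
    case True
    then show ?thesis by measurable
  next
    case False
    have "(\<lambda>\<omega>. m j (fst (fst \<omega> k) j)) \<in> borel_measurable ?S \<longleftrightarrow> (\<lambda>\<omega>. m j (fst (undefined::(nat \<Rightarrow> real) \<times> real) j)) \<in> borel_measurable ?S"
    proof (rule measurable_cong)
      fix \<omega> assume "\<omega> \<in> space ?S"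
      then have "fst \<omega> \<in> space (PiM {1..\<gamma>} (\<lambda>_. Z))" by (auto simp: space_pair_measure)
      then have "fst \<omega> k = undefined" using False by (auto simp: space_PiM PiE_def extensional_def)
      then show "m j (fst (fst \<omega> k) j) = m j (fst (undefined::(nat \<Rightarrow> real) \<times> real) j)" by simp
    qed
    then show ?thesis by simp
  qed
  have gk: "(\<lambda>\<omega>. m j (fst (fst \<omega> (snd \<omega> i)) j)) \<in> borel_measurable ?S" for i
  proof (rule measurable_compose_countable[where f="\<lambda>k \<omega>. m j (fst (fst \<omega> k) j)" and g="\<lambda>\<omega>. snd \<omega> i"])
    show "\<And>k. (\<lambda>\<omega>. m j (fst (fst \<omega> k) j)) \<in> borel_measurable ?S" by (rule fk)
    have "snd \<in> measurable ?S (count_space UNIV)"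
      using measurable_snd[of "PiM {1..\<gamma>} (\<lambda>_. Z)" "measure_pmf Q"] by simp
    then show "(\<lambda>\<omega>. snd \<omega> i) \<in> measurable ?S (count_space UNIV)"
      by (rule measurable_compose) simp
  qed
  have [measurable]: "\<And>i. i \<in> {1..\<gamma>} \<Longrightarrow> (\<lambda>\<omega>. snd (fst \<omega> i)) \<in> borel_measurable ?S" by measurable
  have [measurable]: "\<And>i. i \<in> {1..\<gamma>} \<Longrightarrow> (\<lambda>\<omega>. m j (fst (fst \<omega> i) j)) \<in> borel_measurable ?S" by measurable
  note gk[measurable]
  show ?thesis unfolding hgam_pt[abs_def] by measurable
qed


lemma var_E: "var E (\<lambda>e. e) = sig2"
  unfolding var_def using e0 by (simp add: sig2_def IE_def)

definition F1 where "F1 z = Mon 0 2 z + Mon 2 0 z + 2 * Mon 1 1 z"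

lemma importance_eq: "importance (mtilde m p) p E j = 2 * s2"
proof -
  interpret U: prob_space unif01 by (rule prob_unif01)
  interpret ZZ: prob_space Z by (rule prob_Z)
  let ?M = "Zdist p E \<Otimes>\<^sub>M unif01"
  have M: "?M = Z \<Otimes>\<^sub>M unif01" by (simp add: Zdist_def)
  have iF1: "integrable Z F1" unfolding F1_def[abs_def] by simp
  have IF1: "integral\<^sup>L Z F1 = sig2 + s2" unfolding F1_def[abs_def] by simp
  have iU2: "integrable unif01 (\<lambda>u. bf u ^ 2)" by (rule int_U_pow)
  have iU1: "integrable unif01 (\<lambda>u. bf u ^ 1)" by (rule int_U_pow)
  have i1: "integrable unif01 (\<lambda>u. 1::real)" by simp
  have i0: "integrable Z (\<lambda>u. 1::real)" by simp
  note q1 = pair_prod_integrable[OF prob_Z prob_unif01 iF1 i1] pair_prod_integral[OF prob_Z prob_unif01 iF1 i1]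
  note q2 = pair_prod_integrable[OF prob_Z prob_unif01 i0 iU2] pair_prod_integral[OF prob_Z prob_unif01 i0 iU2]
  note q3 = pair_prod_integrable[OF prob_Z prob_unif01 Mon_int[of 1 0] iU1] pair_prod_integral[OF prob_Z prob_unif01 Mon_int[of 1 0] iU1]
  note q4 = pair_prod_integrable[OF prob_Z prob_unif01 Mon_int[of 0 1] iU1] pair_prod_integral[OF prob_Z prob_unif01 Mon_int[of 0 1] iU1]
  have eq: "(\<lambda>\<omega>. (mtilde m p (fst (fst \<omega>)) + snd (fst \<omega>) - mtilde m p ((fst (fst \<omega>))(j := snd \<omega>)))\<^sup>2)
    = (\<lambda>\<omega>. F1 (fst \<omega>) * 1 + 1 * bf (snd \<omega>) ^ 2 - 2 * (Mon 0 1 (fst \<omega>) * bf (snd \<omega>) ^ 1)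
         - 2 * (Mon 1 0 (fst \<omega>) * bf (snd \<omega>) ^ 1))"
  proof (rule ext)
    fix \<omega> :: "((nat \<Rightarrow> real) \<times> real) \<times> real"
    have "(mtilde m p (fst (fst \<omega>)) + snd (fst \<omega>) - mtilde m p ((fst (fst \<omega>))(j := snd \<omega>)))\<^sup>2
        = (snd (fst \<omega>) + B (fst \<omega>) - bf (snd \<omega>))\<^sup>2"
      by (simp add: mtilde_upd B_def bf_def algebra_simps)
    also have "\<dots> = F1 (fst \<omega>) * 1 + 1 * bf (snd \<omega>) ^ 2 - 2 * (Mon 0 1 (fst \<omega>) * bf (snd \<omega>) ^ 1)
         - 2 * (Mon 1 0 (fst \<omega>) * bf (snd \<omega>) ^ 1)"
      by (simp add: F1_def Mon_def power2_eq_square algebra_simps)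
    finally show "(mtilde m p (fst (fst \<omega>)) + snd (fst \<omega>) - mtilde m p ((fst (fst \<omega>))(j := snd \<omega>)))\<^sup>2
        = F1 (fst \<omega>) * 1 + 1 * bf (snd \<omega>) ^ 2 - 2 * (Mon 0 1 (fst \<omega>) * bf (snd \<omega>) ^ 1)
         - 2 * (Mon 1 0 (fst \<omega>) * bf (snd \<omega>) ^ 1)" .
  qed
  have "(\<integral>\<omega>. (mtilde m p (fst (fst \<omega>)) + snd (fst \<omega>) - mtilde m p ((fst (fst \<omega>))(j := snd \<omega>)))\<^sup>2 \<partial>?M)
      = sig2 + 2 * s2"
    unfolding M eq using q1 q2 q3 q4 IF1
    by (simp add: ZZ.prob_space U.prob_space IU_def[symmetric])
  then show ?thesis unfolding importance_def var_E by simp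
qed

end



lemma der_finite: "finite (derangements {1..(n::nat)})"
proof -
  have "derangements {1..n} \<subseteq> {p. p permutes {1..n}}" by (auto simp: derangements_def)
  moreover have "finite {p. p permutes {1..n}}" by (rule finite_permutations) simp
  ultimately show ?thesis by (rule finite_subset)
qed

lemma der_nonempty:
  assumes n: "2 \<le> n"
  shows "derangements {1..(n::nat)} \<noteq> {}"
proof -
  define c where "c i = (if i \<in> {1..<n} then Suc i else if i = n then 1 else i)" for i
  have inj: "inj_on c {1..n}"
    unfolding inj_on_def c_def using n by auto
  have sub: "c ` {1..n} \<subseteq> {1..n}" unfolding c_def using n by auto
  have "c ` {1..n} = {1..n}" using endo_inj_surj[OF _ sub inj] by simp
  then have "bij_betw c {1..n} {1..n}" using inj by (simp add: bij_betw_def)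
  then have "c permutes {1..n}"
    by (rule bij_imp_permutes) (use n in \<open>auto simp: c_def\<close>)
  moreover have "\<forall>i\<in>{1..n}. c i \<noteq> i" unfolding c_def using n by auto
  ultimately have "c \<in> derangements {1..n}" by (simp add: derangements_def)
  then show ?thesis by auto
qed

lemma phi_in:
  assumes pi: "\<pi> \<in> derangements {1..(n::nat)}" and i: "i \<in> {1..n}" and c: "c \<in> {1..n} - {i, \<pi> i}"
    and two: "\<pi> (\<pi> i) = i"
  shows "\<pi> \<circ> Transposition.transpose (\<pi> i) c \<in> derangements {1..n}"
proof -
  have p: "\<pi> permutes {1..n}" and d: "\<forall>x\<in>{1..n}. \<pi> x \<noteq> x" using pi by (auto simp: derangements_def)
  have pi_i: "\<pi> i \<in> {1..n}" using p i by (metis permutes_in_image)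
  have "\<pi> \<circ> Transposition.transpose (\<pi> i) c permutes {1..n}"
    using permutes_compose[OF permutes_swap_id[OF pi_i, of c] p] c by auto
  moreover have "\<forall>x\<in>{1..n}. (\<pi> \<circ> Transposition.transpose (\<pi> i) c) x \<noteq> x"
  proof
    fix x assume x: "x \<in> {1..n}"
    show "(\<pi> \<circ> Transposition.transpose (\<pi> i) c) x \<noteq> x"
    proof (cases "x = \<pi> i")
      case True
      have "\<pi> c \<noteq> \<pi> i" using c permutes_inj[OF p] by (auto dest: injD)
      then show ?thesis using True by simp
    next
      case F: False
      show ?thesis
      proof (cases "x = c")
        case True
        then show ?thesis using F two c by auto
      next
        case False
        then show ?thesis using F d x by auto
      qed
    qed
  qed
  ultimately show ?thesis by (simp add: derangements_def)
qed

lemma phi_inj: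
  assumes p1: "\<pi>1 \<in> derangements {1..(n::nat)}" and p2: "\<pi>2 \<in> derangements {1..n}"
    and i: "i \<in> {1..n}"
    and c1: "c1 \<in> {1..n} - {i, \<pi>1 i}" and c2: "c2 \<in> {1..n} - {i, \<pi>2 i}"
    and t1: "\<pi>1 (\<pi>1 i) = i" and t2: "\<pi>2 (\<pi>2 i) = i"
    and eq: "\<pi>1 \<circ> Transposition.transpose (\<pi>1 i) c1 = \<pi>2 \<circ> Transposition.transpose (\<pi>2 i) c2"
  shows "\<pi>1 = \<pi>2 \<and> c1 = c2"
proof -
  have pp1: "\<pi>1 permutes {1..n}" and d1: "\<pi>1 i \<noteq> i" using p1 i by (auto simp: derangements_def)
  have pp2: "\<pi>2 permutes {1..n}" and d2: "\<pi>2 i \<noteq> i" using p2 i by (auto simp: derangements_def)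
  define \<sigma> where "\<sigma> = \<pi>1 \<circ> Transposition.transpose (\<pi>1 i) c1"
  have s1: "\<sigma> i = \<pi>1 i" using c1 d1 by (auto simp: \<sigma>_def)
  have s2: "\<sigma> i = \<pi>2 i" using c2 d2 by (auto simp: \<sigma>_def eq)
  have a: "\<pi>1 i = \<pi>2 i" using s1 s2 by simp
  have "\<sigma> c1 = i" using t1 by (simp add: \<sigma>_def)
  moreover have "\<sigma> c2 = i" using t2 by (simp add: \<sigma>_def eq)
  moreover have "inj \<sigma>" unfolding \<sigma>_def
    using permutes_inj[OF pp1] by (intro inj_compose) (auto simp: inj_transpose)
  ultimately have c: "c1 = c2" by (auto dest: injD)
  have "\<pi>1 = \<pi>2"
  proof
    fix x
    have "\<pi>1 x = \<pi>1 (Transposition.transpose (\<pi>1 i) c1 (Transposition.transpose (\<pi>1 i) c1 x))" by simp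
    also have "\<dots> = \<pi>2 (Transposition.transpose (\<pi>2 i) c2 (Transposition.transpose (\<pi>1 i) c1 x))"
      using fun_cong[OF eq, of "Transposition.transpose (\<pi>1 i) c1 x"] by (simp only: comp_apply)
    also have "\<dots> = \<pi>2 x" using a c by simp
    finally show "\<pi>1 x = \<pi>2 x" .
  qed
  with c show ?thesis by simp
qed

lemma der_pairs:
  fixes n :: nat assumes n: "3 \<le> n"
  shows "real (n - 2) * (\<Sum>\<pi>\<in>derangements {1..n}. real (card {i\<in>{1..n}. \<pi> (\<pi> i) = i}))
       \<le> real n * card (derangements {1..n})"
proof -
  define D where "D = derangements {1..n}"
  define A where "A = (SIGMA \<pi>:D. {i\<in>{1..n}. \<pi> (\<pi> i) = i})"
  define T where "T = (SIGMA x:A. {1..n} - {snd x, fst x (snd x)})"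
  define \<Phi> where "\<Phi> x = (fst (fst x) \<circ> Transposition.transpose (fst (fst x) (snd (fst x))) (snd x), snd (fst x))"
    for x :: "((nat \<Rightarrow> nat) \<times> nat) \<times> nat"
  have fD: "finite D" unfolding D_def by (rule der_finite)
  have fA: "finite A" unfolding A_def using fD by auto
  have cA: "card A = (\<Sum>\<pi>\<in>D. card {i\<in>{1..n}. \<pi> (\<pi> i) = i})"
    unfolding A_def using fD by simp
  have ck: "card ({1..n} - {snd x, fst x (snd x)}) = n - 2" if x: "x \<in> A" for x
  proof -
    obtain \<pi> i where xe: "x = (\<pi>, i)" and pD: "\<pi> \<in> D" and i: "i \<in> {1..n}" using x by (auto simp: A_def)
    have p: "\<pi> permutes {1..n}" and d: "\<pi> i \<noteq> i" using pD i by (auto simp: D_def derangements_def)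
    have pi_i: "\<pi> i \<in> {1..n}" using p i by (metis permutes_in_image)
    have "card ({1..n} - {i, \<pi> i}) = card {1..n} - card {i, \<pi> i}"
      using i pi_i by (intro card_Diff_subset) auto
    also have "\<dots> = n - 2" using d by simp
    finally show ?thesis using xe by simp
  qed
  have cT: "card T = card A * (n - 2)"
    unfolding T_def using fA ck by simp
  have inj: "inj_on \<Phi> T"
  proof (rule inj_onI)
    fix x y assume x: "x \<in> T" and y: "y \<in> T" and e: "\<Phi> x = \<Phi> y"
    obtain \<pi>1 i1 c1 where xe: "x = ((\<pi>1, i1), c1)" by (metis prod.exhaust)
    obtain \<pi>2 i2 c2 where ye: "y = ((\<pi>2, i2), c2)" by (metis prod.exhaust)
    have ii: "i1 = i2" using e by (simp add: \<Phi>_def xe ye)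
    have "\<pi>1 = \<pi>2 \<and> c1 = c2"
      using x y e ii by (intro phi_inj[of \<pi>1 n \<pi>2 i1 c1 c2]) (auto simp: \<Phi>_def xe ye T_def A_def D_def)
    then show "x = y" using xe ye ii by simp
  qed
  have img: "\<Phi> ` T \<subseteq> D \<times> {1..n}"
  proof
    fix y assume "y \<in> \<Phi> ` T"
    then obtain \<pi> i c where "((\<pi>, i), c) \<in> T" and ye: "y = \<Phi> ((\<pi>, i), c)" by auto
    then have "\<pi> \<in> D" "i \<in> {1..n}" "c \<in> {1..n} - {i, \<pi> i}" "\<pi> (\<pi> i) = i"
      by (auto simp: T_def A_def)
    then show "y \<in> D \<times> {1..n}" using phi_in[of \<pi> n i c] by (simp add: ye \<Phi>_def D_def)
  qed
  have "card T \<le> card (D \<times> {1..n})"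
    using fD by (intro card_inj_on_le[OF inj img]) auto
  then have "card A * (n - 2) \<le> card D * n" using cT by (simp add: card_cartesian_product)
  then have "real (card A) * real (n - 2) \<le> real (card D) * real n"
    by (metis of_nat_le_iff of_nat_mult)
  then show ?thesis
    using cA unfolding D_def[symmetric] by (simp add: mult.commute)
qed




context setting begin

lemma sample_eq: "sample_space p E \<gamma> = PiM {1..\<gamma>} (\<lambda>_. Z) \<Otimes>\<^sub>M measure_pmf (pmf_of_set (derangements {1..\<gamma>}))"
  by (simp add: sample_space_def Zdist_def)

lemma prob_P: "prob_space (PiM {1..\<gamma>} (\<lambda>_. Z))"
  using prob_Z by (intro prob_space_PiM) auto

lemma der_perm: "\<pi> \<in> derangements {1..\<gamma>} \<Longrightarrow> \<pi> permutes {1..\<gamma>}"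
  and der_ne: "\<pi> \<in> derangements {1..\<gamma>} \<Longrightarrow> \<forall>i\<in>{1..\<gamma>}. \<pi> i \<noteq> i"
  by (auto simp: derangements_def)

lemma Eh:
  assumes g2: "2 \<le> \<gamma>"
  shows "integral\<^sup>L (sample_space p E \<gamma>) (hgam (mtilde m p) j \<gamma>) = 2 * s2"
proof -
  have g0: "0 < \<gamma>" using g2 by simp
  have "integral\<^sup>L (sample_space p E \<gamma>) (hgam (mtilde m p) j \<gamma>)
     = (\<Sum>d\<in>derangements {1..\<gamma>}. \<integral>z. hgam (mtilde m p) j \<gamma> (z, d) \<partial>PiM {1..\<gamma>} (\<lambda>_. Z)) / card (derangements {1..\<gamma>})"
    unfolding sample_eq
    by (rule pair_pmf_integral(2)[OF prob_P der_finite der_nonempty[OF g2] hgam_meas])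
       (rule hP(1)[OF der_perm der_ne g0])
  also have "\<dots> = (\<Sum>d\<in>derangements {1..\<gamma>}. 2 * s2) / card (derangements {1..\<gamma>})"
    by (intro arg_cong2[where f="(/)"] sum.cong refl hP(2)[OF der_perm der_ne g0])
  also have "\<dots> = 2 * s2"
    using der_finite[of \<gamma>] der_nonempty[OF g2] by simp
  finally show ?thesis .
qed

definition c1 where "c1 = (\<integral>z. g z * g z \<partial>Z) + 4 * ((s2 + sig2) * s2)"

lemma zeta_eq:
  assumes g2: "2 \<le> \<gamma>"
  shows "zeta (mtilde m p) p E j \<gamma> = c1 / \<gamma> + 4 * (s2 * s2) *
     (\<Sum>\<pi>\<in>derangements {1..\<gamma>}. real (N2 \<gamma> \<pi>)) / (card (derangements {1..\<gamma>}) * \<gamma>\<^sup>2)"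
proof -
  have g0: "0 < \<gamma>" using g2 by simp
  let ?D = "derangements {1..\<gamma>}"
  have fD: "finite ?D" and nD: "?D \<noteq> {}" using der_finite der_nonempty[OF g2] by auto
  have cD: "0 < real (card ?D)" using fD nD by (simp add: card_gt_0_iff)
  have meas: "(\<lambda>\<omega>. (hgam (mtilde m p) j \<gamma> \<omega> - 2 * s2)\<^sup>2) \<in> borel_measurable
      (PiM {1..\<gamma>} (\<lambda>_. Z) \<Otimes>\<^sub>M measure_pmf (pmf_of_set ?D))"
    using hgam_meas by measurable
  have "zeta (mtilde m p) p E j \<gamma> = (\<integral>\<omega>. (hgam (mtilde m p) j \<gamma> \<omega> - 2 * s2)\<^sup>2 \<partial>sample_space p E \<gamma>)"
    unfolding zeta_def var_def Eh[OF g2] ..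
  also have "\<dots> = (\<Sum>d\<in>?D. \<integral>z. (hgam (mtilde m p) j \<gamma> (z, d) - 2 * s2)\<^sup>2 \<partial>PiM {1..\<gamma>} (\<lambda>_. Z)) / card ?D"
    unfolding sample_eq
    by (rule pair_pmf_integral(2)[OF prob_P fD nD meas])
       (rule hP(3)[OF der_perm der_ne g0])
  also have "\<dots> = (\<Sum>d\<in>?D. (\<gamma> * (\<integral>z. g z * g z \<partial>Z) + 4 * (\<gamma> * ((s2 + sig2) * s2) + N2 \<gamma> d * (s2 * s2))) / \<gamma>\<^sup>2) / card ?D"
    by (intro arg_cong2[where f="(/)"] sum.cong refl hP(4)[OF der_perm der_ne g0])
  also have "\<dots> = (card ?D * (\<gamma> * c1) + 4 * (s2 * s2) * (\<Sum>d\<in>?D. real (N2 \<gamma> d))) / \<gamma>\<^sup>2 / card ?D"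
    by (simp add: sum_divide_distrib[symmetric] sum.distrib sum_distrib_left sum_distrib_right c1_def algebra_simps)
  also have "\<dots> = c1 / \<gamma> + 4 * (s2 * s2) * (\<Sum>\<pi>\<in>?D. real (N2 \<gamma> \<pi>)) / (card ?D * \<gamma>\<^sup>2)"
    using cD g0 by (simp add: field_simps power2_eq_square)
  finally show ?thesis .
qed

lemma asym:
  assumes s2p: "s2 > 0" and sp: "sig2 > 0"
  shows "0 < c1" and "(\<lambda>\<gamma>. zeta (mtilde m p) p E j \<gamma>) \<sim>[sequentially] (\<lambda>\<gamma>. c1 / real \<gamma>)"
proof -
  have "0 < (s2 + sig2) * s2" using s2p sp by simp
  then show c1p: "0 < c1" using Eg2_nonneg unfolding c1_def by linarith
  define Q where "Q \<gamma> = (\<Sum>\<pi>\<in>derangements {1..\<gamma>}. real (N2 \<gamma> \<pi>)) / (card (derangements {1..\<gamma>}) * real \<gamma>)" for \<gamma>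
  have Qb: "eventually (\<lambda>\<gamma>. 0 \<le> Q \<gamma> \<and> Q \<gamma> \<le> 1 / (real \<gamma> - 2)) sequentially"
  proof (rule eventually_sequentiallyI[of 3])
    fix \<gamma> :: nat assume g3: "3 \<le> \<gamma>"
    let ?D = "derangements {1..\<gamma>}"
    have cD: "0 < real (card ?D)" using der_finite[of \<gamma>] der_nonempty[of \<gamma>] g3 by (simp add: card_gt_0_iff)
    have S0: "0 \<le> (\<Sum>\<pi>\<in>?D. real (N2 \<gamma> \<pi>))" by (simp add: sum_nonneg)
    have key: "real (\<gamma> - 2) * (\<Sum>\<pi>\<in>?D. real (N2 \<gamma> \<pi>)) \<le> real \<gamma> * card ?D"
      using der_pairs[OF g3] N2_def[OF der_perm der_ne] by (simp add: N2_def)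
    have r: "real (\<gamma> - 2) = real \<gamma> - 2" using g3 by simp
    have g: "0 < real \<gamma> - 2" using g3 by simp
    show "0 \<le> Q \<gamma> \<and> Q \<gamma> \<le> 1 / (real \<gamma> - 2)"
    proof
      show "0 \<le> Q \<gamma>" unfolding Q_def using S0 cD by simp
      show "Q \<gamma> \<le> 1 / (real \<gamma> - 2)"
        unfolding Q_def using key cD g g3 r by (simp add: field_simps)
    qed
  qed
  have lim0: "(\<lambda>\<gamma>::nat. 1 / (real \<gamma> - 2)) \<longlonglongrightarrow> 0"
  proof -
    have "filterlim (\<lambda>\<gamma>::nat. (-2) + real \<gamma>) at_top sequentially"
      by (rule filterlim_tendsto_add_at_top[OF tendsto_const filterlim_real_sequentially])
    then have "((\<lambda>\<gamma>::nat. inverse ((-2) + real \<gamma>)) \<longlongrightarrow> 0) sequentially"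
      by (rule tendsto_inverse_0_at_top)
    then show ?thesis by (simp add: divide_inverse)
  qed
  have Q0: "Q \<longlonglongrightarrow> 0"
    by (rule tendsto_sandwich[OF _ _ tendsto_const lim0]) (use Qb in \<open>auto elim: eventually_mono\<close>)
  have L: "(\<lambda>\<gamma>. 1 + (4 * (s2 * s2) / c1) * Q \<gamma>) \<longlonglongrightarrow> 1"
    using tendsto_add[OF tendsto_const tendsto_mult[OF tendsto_const Q0], of 1 "4 * (s2 * s2) / c1"] by simp
  have ev: "eventually (\<lambda>\<gamma>. 1 + (4 * (s2 * s2) / c1) * Q \<gamma> = zeta (mtilde m p) p E j \<gamma> / (c1 / real \<gamma>)) sequentially"
  proof (rule eventually_sequentiallyI[of 2])
    fix \<gamma> :: nat assume g2: "2 \<le> \<gamma>"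
    let ?D = "derangements {1..\<gamma>}"
    have cD: "0 < real (card ?D)" using der_finite[of \<gamma>] der_nonempty[of \<gamma>] g2 by (simp add: card_gt_0_iff)
    show "1 + (4 * (s2 * s2) / c1) * Q \<gamma> = zeta (mtilde m p) p E j \<gamma> / (c1 / real \<gamma>)"
      unfolding zeta_eq[OF g2] Q_def using cD c1p g2 by (simp add: field_simps power2_eq_square)
  qed
  show "(\<lambda>\<gamma>. zeta (mtilde m p) p E j \<gamma>) \<sim>[sequentially] (\<lambda>\<gamma>. c1 / real \<gamma>)"
    by (rule asymp_equivI') (rule Lim_transform_eventually[OF L ev])
qed

end

theorem mainTheorem7:
  fixes p j :: nat and m :: "nat \<Rightarrow> real \<Rightarrow> real" and K :: real and E :: "real measure"
  assumes "j \<in> {1..p}"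
    and "mtilde m p \<in> borel_measurable (Xdist p)"
    and "K > 0"
    and "\<forall>x\<in>space (Xdist p). \<bar>mtilde m p x\<bar> \<le> K"
    and "prob_space E" and "sets E = sets borel"
    and "integrable E (\<lambda>e. e ^ 4)"
    and "(\<integral>e. e \<partial>E) = 0"
    and "var E (\<lambda>e. e) > 0"
    and "var unif01 (m j) > 0"
  shows "\<exists>c1>0.
           (\<forall>\<gamma>\<ge>2. (\<integral>\<omega>. (hgam (mtilde m p) j \<gamma> \<omega> - importance (mtilde m p) p E j)\<^sup>2
                        \<partial>sample_space p E \<gamma>) = zeta (mtilde m p) p E j \<gamma>)
         \<and> (\<lambda>\<gamma>. zeta (mtilde m p) p E j \<gamma>) \<sim>[sequentially] (\<lambda>\<gamma>. c1 / real \<gamma>)"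
proof -
  interpret setting p j m K E by (rule setting.intro[OF assms(1,2,4,5,6,7,8)])
  have "var unif01 (m j) = s2"
    unfolding var_def s2_def IU_def bf_def mu_def ..
  then have s2p: "s2 > 0" using assms(10) by simp
  have sp: "sig2 > 0" using var_E assms(9) by simp
  show ?thesis
  proof (intro exI conjI allI impI)
    show "0 < c1" by (rule asym(1)[OF s2p sp])
    show "(\<lambda>\<gamma>. zeta (mtilde m p) p E j \<gamma>) \<sim>[sequentially] (\<lambda>\<gamma>. c1 / real \<gamma>)"
      by (rule asym(2)[OF s2p sp])
    fix \<gamma> :: nat assume g2: "2 \<le> \<gamma>"
    show "(\<integral>\<omega>. (hgam (mtilde m p) j \<gamma> \<omega> - importance (mtilde m p) p E j)\<^sup>2 \<partial>sample_space p E \<gamma>)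
        = zeta (mtilde m p) p E j \<gamma>"
      unfolding zeta_def var_def Eh[OF g2] importance_eq ..
  qed
qed

end
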